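(* Let $(G,u,v,\alpha,\beta)$ be a Guvab with $\beta=1$. If there exists $N\ge0$ such that $\{W_n\}_{n\ge N}$ is a constant sequence, then $\{W_n\}_{n\ge1}$ is a constant sequence.
   Context: A Guvab is a tuple $(G,u,v,\alpha,\beta)$ where $G$ is a finite, connected, simple graph, $u,v\in V(G)$, and $\alpha,\beta\in[0,1]$ with $\alpha\le\beta$. A random walk on $G$ with starting vertex $w$ and laziness $\gamma$ is the Markov chain $R_0=w$ and, for $i\ge1$, $R_i=R_{i-1}$ with probability $\gamma$ and $R_i=t$ with probability $\frac{1-\gamma}{\deg(R_{i-1})}$ for each neighbor $t$ of $R_{i-1}$. $\mu_n$ is the distribution after $n$ steps of the walk from $u$ with laziness $\alpha$, $\nu_n$ that of the walk from $v$ with laziness $\beta$, and $W_n=W(\mu_n,\nu_n)$ is the Wasserstein ($L^1$ optimal transport) distance with respect to the graph distance. *)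

theory Defs
  imports "HOL-Analysis.Analysis"
begin

definition gpath :: "('a \<Rightarrow> 'a \<Rightarrow> bool) \<Rightarrow> 'a \<Rightarrow> 'a \<Rightarrow> nat \<Rightarrow> bool" where
  "gpath E x y n \<longleftrightarrow> (\<exists>f :: nat \<Rightarrow> 'a. f 0 = x \<and> f n = y \<and> (\<forall>i<n. E (f i) (f (Suc i))))"

definition connected_simple_graph :: "'a set \<Rightarrow> ('a \<Rightarrow> 'a \<Rightarrow> bool) \<Rightarrow> bool" where
  "connected_simple_graph V E \<longleftrightarrow>
     finite V \<and> V \<noteq> {} \<and>
     (\<forall>x y. E x y \<longrightarrow> x \<in> V \<and> y \<in> V) \<and>
     (\<forall>x y. E x y \<longrightarrow> E y x) \<and>
     (\<forall>x. \<not> E x x) \<and>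
     (\<forall>x\<in>V. \<forall>y\<in>V. \<exists>n. gpath E x y n)"

definition gdist :: "('a \<Rightarrow> 'a \<Rightarrow> bool) \<Rightarrow> 'a \<Rightarrow> 'a \<Rightarrow> nat" where
  "gdist E x y = (LEAST n. gpath E x y n)"

definition deg :: "'a set \<Rightarrow> ('a \<Rightarrow> 'a \<Rightarrow> bool) \<Rightarrow> 'a \<Rightarrow> nat" where
  "deg V E x = card {y\<in>V. E x y}"

definition trans_prob :: "'a set \<Rightarrow> ('a \<Rightarrow> 'a \<Rightarrow> bool) \<Rightarrow> real \<Rightarrow> 'a \<Rightarrow> 'a \<Rightarrow> real" where
  "trans_prob V E g x y =
     (if x = y then g else if E x y then (1 - g) / real (deg V E x) else 0)"

fun walk_dist :: "'a set \<Rightarrow> ('a \<Rightarrow> 'a \<Rightarrow> bool) \<Rightarrow> real \<Rightarrow> 'a \<Rightarrow> nat \<Rightarrow> 'a \<Rightarrow> real" where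
  "walk_dist V E g w 0 = (\<lambda>y. if y = w then 1 else 0)"
| "walk_dist V E g w (Suc n) =
     (\<lambda>y. \<Sum>x\<in>V. walk_dist V E g w n x * trans_prob V E g x y)"

definition couplings :: "'a set \<Rightarrow> ('a \<Rightarrow> real) \<Rightarrow> ('a \<Rightarrow> real) \<Rightarrow> ('a \<Rightarrow> 'a \<Rightarrow> real) set" where
  "couplings V mu nu = {p. (\<forall>x y. p x y \<ge> 0) \<and> (\<forall>x y. (x \<notin> V \<or> y \<notin> V) \<longrightarrow> p x y = 0) \<and>
      (\<forall>x\<in>V. (\<Sum>y\<in>V. p x y) = mu x) \<and> (\<forall>y\<in>V. (\<Sum>x\<in>V. p x y) = nu y)}"

definition wasserstein :: "'a set \<Rightarrow> ('a \<Rightarrow> 'a \<Rightarrow> bool) \<Rightarrow> ('a \<Rightarrow> real) \<Rightarrow> ('a \<Rightarrow> real) \<Rightarrow> real" where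
  "wasserstein V E mu nu =
     Inf ((\<lambda>p. \<Sum>x\<in>V. \<Sum>y\<in>V. p x y * real (gdist E x y)) ` couplings V mu nu)"

definition W_seq :: "'a set \<Rightarrow> ('a \<Rightarrow> 'a \<Rightarrow> bool) \<Rightarrow> 'a \<Rightarrow> 'a \<Rightarrow> real \<Rightarrow> real \<Rightarrow> nat \<Rightarrow> real" where
  "W_seq V E u v \<alpha> \<beta> n = wasserstein V E (walk_dist V E \<alpha> u n) (walk_dist V E \<beta> v n)"

definition guvab :: "'a set \<Rightarrow> ('a \<Rightarrow> 'a \<Rightarrow> bool) \<Rightarrow> 'a \<Rightarrow> 'a \<Rightarrow> real \<Rightarrow> real \<Rightarrow> bool" where
  "guvab V E u v \<alpha> \<beta> \<longleftrightarrow> connected_simple_graph V E \<and> u \<in> V \<and> v \<in> V \<and>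
     0 \<le> \<alpha> \<and> \<alpha> \<le> \<beta> \<and> \<beta> \<le> 1"

end

theory Submission
  imports Defs "HOL-Library.Function_Algebras"
begin


definition fscale :: "real \<Rightarrow> ('a \<Rightarrow> real) \<Rightarrow> ('a \<Rightarrow> real)" where
  "fscale c f = (\<lambda>x. c * f x)"

interpretation fv: vector_space fscale
  by unfold_locales (auto simp: fscale_def plus_fun_def algebra_simps)

lemma sum_fun_apply: "finite A \<Longrightarrow> (sum F A) x = (\<Sum>a\<in>A. F a x)"
  by (induction A rule: finite_induct) auto

lemma supp_in_span:
  assumes "finite V" "\<And>x. x \<notin> V \<Longrightarrow> a x = 0"
  shows "a \<in> fv.span ((\<lambda>z. (\<lambda>x. if x = z then 1 else 0)) ` V)"
proof -
  have "a = (\<Sum>z\<in>V. fscale (a z) (\<lambda>x. if x = z then 1 else 0))"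
  proof
    fix x show "a x = (\<Sum>z\<in>V. fscale (a z) (\<lambda>x. if x = z then 1 else 0)) x"
      using assms by (auto simp: sum_fun_apply fscale_def if_distrib cong: if_cong)
  qed
  also have "\<dots> \<in> fv.span ((\<lambda>z. (\<lambda>x. if x = z then 1 else 0)) ` V)"
    by (intro fv.span_sum fv.span_scale fv.span_base) auto
  finally show ?thesis .
qed

lemma krylov:
  fixes T :: "('a \<Rightarrow> real) \<Rightarrow> ('a \<Rightarrow> real)" and V :: "'a set" and g
  assumes fin: "finite V"
  and add: "\<And>a b. T (a + b) = T a + T b"
  and scl: "\<And>c a. T (fscale c a) = fscale c (T a)"
  and supp: "\<And>a x. x \<notin> V \<Longrightarrow> T a x = 0"
  and kr: "\<And>a. T (T a) = 0 \<Longrightarrow> T a = 0"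
  and n: "1 \<le> n"
  shows "(T^^n) g \<in> fv.span {(T^^k) g | k. M \<le> k}"
proof -
  define y where "y k = (T^^k) g" for k
  define A where "A M = fv.span {y k | k. M \<le> k}" for M
  have ySuc: "y (Suc k) = T (y k)" for k by (simp add: y_def)
  have T0: "T 0 = 0"
  proof -
    have "T (fscale 0 0) = fscale 0 (T 0)" by (rule scl)
    then show ?thesis by (simp add: fscale_def zero_fun_def)
  qed
  have Tdiff: "T (a - b) = T a - T b" for a b
  proof -
    have "a - b = a + fscale (-1) b" by (auto simp: fscale_def)
    then have "T (a - b) = T a + fscale (-1) (T b)" by (metis add scl)
    moreover have "T a + fscale (-1) (T b) = T a - T b" by (auto simp: fscale_def)
    ultimately show ?thesis by simp
  qed
  have gen_sub: "{y k | k. M \<le> k} \<subseteq> A M" for M unfolding A_def by (rule fv.span_superset)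
  have yA: "M \<le> k \<Longrightarrow> y k \<in> A M" for k M using gen_sub by blast
  have imgA: "T w \<in> A (Suc M)" if "w \<in> A M" for w M
    using that unfolding A_def
  proof (induction rule: fv.span_induct_alt)
    case base then show ?case by (metis T0 fv.span_zero zero_fun_def)
  next
    case (step c x z)
    then obtain k where k: "x = y k" "M \<le> k" by blast
    have eqn: "T (fscale c x + z) = fscale c (y (Suc k)) + T z" by (simp only: add scl k ySuc)
    have "y (Suc k) \<in> fv.span {y k |k. Suc M \<le> k}"
      by (rule fv.span_base) (use k in auto)
    then have "fscale c (y (Suc k)) + T z \<in> fv.span {y k |k. Suc M \<le> k}"
      using step.IH by (rule fv.span_add[OF fv.span_scale])
    then show ?case by (simp only: eqn)
  qed
  have preA: "\<exists>w\<in>A M. z = T w" if "z \<in> A (Suc M)" for z M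
    using that unfolding A_def
  proof (induction rule: fv.span_induct_alt)
    case base
    have "(0::'a\<Rightarrow>real) \<in> fv.span {y k |k. M \<le> k}" by (rule fv.span_zero)
    moreover have "0 = T 0" using T0 by simp
    ultimately show ?case by blast
  next
    case (step c x z)
    from step.hyps obtain k where k: "x = y k" "Suc M \<le> k" by blast
    then obtain k' where k': "k = Suc k'" "M \<le> k'" by (cases k) auto
    from step.IH obtain w where w: "w \<in> fv.span {y k |k. M \<le> k}" "z = T w" by blast
    have "fscale c (y k') + w \<in> fv.span {y k |k. M \<le> k}"
      by (rule fv.span_add[OF fv.span_scale[OF fv.span_base] w(1)]) (use k' in auto)
    moreover have "fscale c x + z = T (fscale c (y k') + w)"
      by (simp only: add scl k k' ySuc w)
    ultimately show ?case by blast
  qed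
  have bck: "y k \<in> A (Suc k)" if k1: "1 \<le> k" and k2: "y (Suc k) \<in> A (Suc (Suc k))" for k
  proof -
    obtain w where w: "w \<in> A (Suc k)" "y (Suc k) = T w" using preA k2 by blast
    obtain w' where w': "w' \<in> A k" "w = T w'" using preA w(1) by blast
    obtain k' where k': "k = Suc k'" using k1 by (cases k) auto
    have e1: "T (T (y k')) = T (T w')"
      using w w' by (metis ySuc k')
    have "T (T (y k' - w')) = 0"
      by (simp only: Tdiff e1 diff_self)
    then have "T (y k' - w') = 0" by (rule kr)
    then have "T (y k') = T w'" by (simp only: Tdiff right_minus_eq)
    then have "y k = w" by (metis ySuc k' w')
    then show ?thesis using w by simp
  qed
  have fwd: "y (Suc k) \<in> A (Suc (Suc k))" if "y k \<in> A (Suc k)" for k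
    using imgA[OF that] by (simp add: ySuc)
  have exK: "\<exists>K\<ge>1. y K \<in> A (Suc K)"
  proof (rule ccontr)
    assume "\<not> ?thesis"
    then have nin: "y k \<notin> A (Suc k)" if "1 \<le> k" for k using that by blast
    have ind: "fv.independent {y j | j. k \<le> j \<and> j \<le> k + d} \<and> card {y j | j. k \<le> j \<and> j \<le> k + d} = Suc d"
      if "1 \<le> k" for d k
      using that
    proof (induction d arbitrary: k)
      case 0
      have "{y j | j. k \<le> j \<and> j \<le> k + 0} = {y k}" by auto
      moreover have "y k \<noteq> 0"
      proof
        assume "y k = 0"
        then have "y k \<in> A (Suc k)" by (simp add: A_def fv.span_zero)
        then show False using nin 0 by blast
      qed
      ultimately show ?case by (simp add: fv.independent_insert fv.span_empty)
    next
      case (Suc d)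
      have eq: "{y j | j. k \<le> j \<and> j \<le> k + Suc d} = insert (y k) {y j | j. Suc k \<le> j \<and> j \<le> Suc k + d}"
        by (auto simp: le_Suc_eq) (metis le_antisym not_less_eq_eq)
      define S where "S = {y j | j. Suc k \<le> j \<and> j \<le> Suc k + d}"
      have IH: "fv.independent S" "card S = Suc d"
        using Suc.IH[of "Suc k"] Suc.prems unfolding S_def by auto
      have sub: "fv.span S \<subseteq> A (Suc k)"
        unfolding A_def S_def by (rule fv.span_mono) auto
      have notin: "y k \<notin> fv.span S"
        using sub nin Suc.prems by blast
      have notin2: "y k \<notin> S"
      proof
        assume "y k \<in> S"
        then have "y k \<in> fv.span S" by (rule fv.span_base)
        then show False using notin by simp
      qed
      have fin2: "finite S"
      proof -
        have "S = y ` {Suc k..Suc k + d}" unfolding S_def by auto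
        then show ?thesis by simp
      qed
      have "fv.independent (insert (y k) S)"
        using IH(1) notin by (rule fv.independent_insertI[rotated])
      moreover have "card (insert (y k) S) = Suc (Suc d)"
        using fin2 notin2 IH(2) by simp
      ultimately show ?case unfolding eq S_def by simp
    qed
    define D where "D = (\<lambda>z. (\<lambda>x. if x = z then (1::real) else 0)) ` V"
    have "{y j | j. 1 \<le> j \<and> j \<le> 1 + card V} \<subseteq> fv.span D"
    proof clarify
      fix j :: nat assume "1 \<le> j" "j \<le> 1 + card V"
      then obtain j' where "j = Suc j'" by (cases j) auto
      then show "y j \<in> fv.span D" unfolding D_def
        by (auto simp: ySuc intro!: supp_in_span fin supp)
    qed
    from fv.independent_span_bound[OF _ _ this] ind[of 1 "card V"]
    have "card {y j | j. 1 \<le> j \<and> j \<le> 1 + card V} \<le> card D"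
      using fin unfolding D_def by auto
    moreover have "card D \<le> card V" unfolding D_def by (rule card_image_le[OF fin])
    ultimately show False using ind[of 1 "card V"] by simp
  qed
  then obtain K where K: "1 \<le> K" "y K \<in> A (Suc K)" by blast
  have allk: "y k \<in> A (Suc k)" if "1 \<le> k" for k
  proof (cases "k \<le> K")
    case True
    have "y (K - i) \<in> A (Suc (K - i))" if "i \<le> K - 1" for i
      using that
    proof (induction i)
      case 0 then show ?case using K by simp
    next
      case (Suc i)
      have "Suc (K - Suc i) = K - i" using Suc.prems by simp
      then show ?case using bck[of "K - Suc i"] Suc by simp
    qed
    from this[of "K - k"] show ?thesis using True that by simp
  next
    case False
    have "y (K + i) \<in> A (Suc (K + i))" for i
      by (induction i) (use K fwd in auto)
    from this[of "k - K"] show ?thesis using False by simp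
  qed
  have chn: "A k \<subseteq> A (Suc k)" if "1 \<le> k" for k
  proof -
    have "{y j | j. k \<le> j} \<subseteq> A (Suc k)"
    proof clarify
      fix j assume "k \<le> j"
      then show "y j \<in> A (Suc k)"
        using allk[OF that] yA[of "Suc k" j] by (cases "j = k") auto
    qed
    then have "fv.span {y j | j. k \<le> j} \<subseteq> fv.span (A (Suc k))" by (rule fv.span_mono)
    then show ?thesis by (simp only: A_def fv.span_span)
  qed
  have "y n \<in> A (n + i)" for i
  proof (induction i)
    case 0 then show ?case using yA by simp
  next
    case (Suc i) then show ?case using chn[of "n + i"] n by auto
  qed
  from this[of M] have "y n \<in> A (n + M)" .
  moreover have "A (n + M) \<subseteq> A M" unfolding A_def by (rule fv.span_mono) auto
  ultimately show ?thesis unfolding A_def y_def by blast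
qed




lemma ifmult: "(if P then 1 else 0) * (t::real) = (if P then t else 0)" by simp

lemma walk_one:
  assumes "v \<in> V" "finite V"
  shows "walk_dist V E 1 v n = (\<lambda>y. if y = v then 1 else 0)"
proof (induction n)
  case 0 then show ?case by simp
next
  case (Suc n)
  show ?case
  proof
    fix y
    have "walk_dist V E 1 v (Suc n) y = (\<Sum>x\<in>V. (if x = v then trans_prob V E 1 x y else 0))"
      using Suc by (simp add: ifmult)
    also have "\<dots> = trans_prob V E 1 v y" using assms by simp
    also have "\<dots> = (if y = v then 1 else 0)" by (auto simp: trans_prob_def)
    finally show "walk_dist V E 1 v (Suc n) y = (if y = v then 1 else 0)" .
  qed
qed

definition Top :: "'a set \<Rightarrow> ('a \<Rightarrow> 'a \<Rightarrow> bool) \<Rightarrow> real \<Rightarrow> ('a \<Rightarrow> real) \<Rightarrow> ('a \<Rightarrow> real)" where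
  "Top V E g a = (\<lambda>x. \<Sum>y\<in>V. trans_prob V E g x y * a y)"

lemma walk_eval:
  assumes "u \<in> V" "finite V"
  shows "(\<Sum>x\<in>V. walk_dist V E g u n x * a x) = ((Top V E g ^^ n) a) u"
proof (induction n arbitrary: a)
  case 0 then show ?case using assms by (simp add: ifmult)
next
  case (Suc n)
  have "(\<Sum>x\<in>V. walk_dist V E g u (Suc n) x * a x)
      = (\<Sum>y\<in>V. \<Sum>x\<in>V. walk_dist V E g u n x * trans_prob V E g x y * a y)"
    by (simp add: sum_distrib_right)
  also have "\<dots> = (\<Sum>x\<in>V. \<Sum>y\<in>V. walk_dist V E g u n x * trans_prob V E g x y * a y)"
    by (rule sum.swap)
  also have "\<dots> = (\<Sum>x\<in>V. walk_dist V E g u n x * Top V E g a x)"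
    by (simp add: Top_def sum_distrib_left mult.assoc)
  also have "\<dots> = ((Top V E g ^^ n) (Top V E g a)) u" by (rule Suc.IH)
  also have "\<dots> = ((Top V E g ^^ Suc n) a) u" by (simp only: funpow_Suc_right comp_def)
  finally show ?case .
qed

lemma trans_nonneg:
  assumes "0 \<le> g" "g \<le> 1" shows "0 \<le> trans_prob V E g x y"
  using assms by (auto simp: trans_prob_def)

lemma walk_nonneg:
  assumes "0 \<le> g" "g \<le> 1" shows "0 \<le> walk_dist V E g u n x"
proof (induction n arbitrary: x)
  case 0 then show ?case by simp
next
  case (Suc n) then show ?case
    by (auto intro!: sum_nonneg mult_nonneg_nonneg trans_nonneg assms)
qed

lemma deg_pos:
  assumes "connected_simple_graph V E" "x \<in> V" "2 \<le> card V"
  shows "0 < deg V E x"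
proof -
  have fin: "finite V" using assms(1) by (simp add: connected_simple_graph_def)
  obtain y where y: "y \<in> V" "y \<noteq> x"
  proof -
    have "\<not> V \<subseteq> {x}"
    proof
      assume "V \<subseteq> {x}"
      then have "card V \<le> card {x}" by (rule card_mono[rotated]) simp
      then show False using assms(3) by simp
    qed
    then show ?thesis using that by blast
  qed
  obtain n where "gpath E x y n" using assms(1,2) y(1) unfolding connected_simple_graph_def by blast
  then obtain f where f: "f 0 = x" "f n = y" "\<forall>i<n. E (f i) (f (Suc i))" by (auto simp: gpath_def)
  have "n \<noteq> 0"
  proof
    assume "n = 0" then show False using f y by simp
  qed
  then have "E x (f 1)" using f by auto
  then have "f 1 \<in> {z\<in>V. E x z}" using assms(1) by (auto simp: connected_simple_graph_def)
  moreover have "finite {z\<in>V. E x z}" using fin by simp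
  ultimately show ?thesis unfolding deg_def by (metis card_gt_0_iff empty_iff)
qed

lemma row_sum:
  assumes "connected_simple_graph V E" "2 \<le> card V"
  shows "Top V E g (\<lambda>x. if x \<in> V then 1 else 0) = (\<lambda>x. if x \<in> V then 1 else 0)"
proof
  fix x
  have fin: "finite V" using assms(1) by (simp add: connected_simple_graph_def)
  have cs: "(\<forall>x y. E x y \<longrightarrow> x \<in> V \<and> y \<in> V)" "\<forall>x. \<not> E x x"
    using assms(1) by (auto simp: connected_simple_graph_def)
  show "Top V E g (\<lambda>x. if x \<in> V then 1 else 0) x = (if x \<in> V then 1 else 0)"
  proof (cases "x \<in> V")
    case False
    then have "trans_prob V E g x y = 0" if "y \<in> V" for y using that cs by (auto simp: trans_prob_def)
    then show ?thesis using False by (simp add: Top_def)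
  next
    case True
    have dp: "0 < deg V E x" using deg_pos[OF assms(1) True assms(2)] .
    have "Top V E g (\<lambda>x. if x \<in> V then 1 else 0) x = (\<Sum>y\<in>V. trans_prob V E g x y)"
      by (simp add: Top_def)
    also have "\<dots> = (\<Sum>y\<in>V. (if y = x then g else 0) + (if E x y then (1 - g) / real (deg V E x) else 0))"
      by (rule sum.cong) (use cs in \<open>auto simp: trans_prob_def\<close>)
    also have "\<dots> = g + (\<Sum>y\<in>{y\<in>V. E x y}. (1 - g) / real (deg V E x))"
      using True fin by (simp add: sum.distrib sum.inter_filter[symmetric])
    also have "\<dots> = 1" using dp by (simp add: deg_def)
    finally show ?thesis using True by simp
  qed
qed




lemma wass_delta:
  assumes fin: "finite V" and v: "v \<in> V" and nn: "\<And>x. 0 \<le> mu x" and s1: "(\<Sum>x\<in>V. mu x) = 1"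
  shows "wasserstein V E mu (\<lambda>y. if y = v then 1 else 0) = (\<Sum>x\<in>V. mu x * real (gdist E x v))"
proof -
  let ?C = "couplings V mu (\<lambda>y. if y = v then 1 else 0)"
  let ?c = "(\<Sum>x\<in>V. mu x * real (gdist E x v))"
  let ?cost = "\<lambda>p. \<Sum>x\<in>V. \<Sum>y\<in>V. p x y * real (gdist E x y)"
  define p0 where "p0 x y = (if x \<in> V \<and> y = v then mu x else 0)" for x y
  have p0C: "p0 \<in> ?C"
  proof -
    have c1: "\<forall>x y. 0 \<le> p0 x y" unfolding p0_def using nn by simp
    have c2: "\<forall>x y. (x \<notin> V \<or> y \<notin> V) \<longrightarrow> p0 x y = 0" unfolding p0_def using assms(2) by auto
    have c3: "\<forall>x\<in>V. (\<Sum>y\<in>V. p0 x y) = mu x"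
    proof
      fix x assume x: "x \<in> V"
      have "(\<Sum>y\<in>V. p0 x y) = (\<Sum>y\<in>V. if y = v then mu x else 0)"
        by (rule sum.cong) (simp_all add: p0_def x)
      also have "\<dots> = mu x" by (simp add: sum.delta' fin assms(2))
      finally show "(\<Sum>y\<in>V. p0 x y) = mu x" .
    qed
    have c4: "\<forall>y\<in>V. (\<Sum>x\<in>V. p0 x y) = (if y = v then 1 else 0)"
    proof
      fix y assume y: "y \<in> V"
      show "(\<Sum>x\<in>V. p0 x y) = (if y = v then 1 else 0)"
      proof (cases "y = v")
        case True
        have "(\<Sum>x\<in>V. p0 x y) = (\<Sum>x\<in>V. mu x)"
          by (rule sum.cong) (simp_all add: p0_def True)
        then show ?thesis using s1 True by simp
      next
        case False
        have "(\<Sum>x\<in>V. p0 x y) = (\<Sum>x\<in>V. 0)"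
          by (rule sum.cong) (simp_all add: p0_def False)
        then show ?thesis using False by simp
      qed
    qed
    show ?thesis unfolding couplings_def using c1 c2 c3 c4 by blast
  qed
  have costC: "?cost p = ?c" if "p \<in> ?C" for p
  proof -
    have p: "\<forall>x y. 0 \<le> p x y" "\<forall>x\<in>V. (\<Sum>y\<in>V. p x y) = mu x"
      "\<forall>y\<in>V. (\<Sum>x\<in>V. p x y) = (if y = v then 1 else 0)"
      using that unfolding couplings_def mem_Collect_eq by blast+
    have z: "p x y = 0" if "x \<in> V" "y \<in> V" "y \<noteq> v" for x y
    proof -
      have s0: "(\<Sum>x\<in>V. p x y) = 0" using p(3) that by simp
      have iff: "(\<Sum>x\<in>V. p x y) = 0 \<longleftrightarrow> (\<forall>x\<in>V. p x y = 0)"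
        by (rule sum_nonneg_eq_0_iff[OF fin]) (use p(1) in blast)
      have "\<forall>x\<in>V. p x y = 0" using iff s0 by (rule iffD1)
      then show ?thesis using that by blast
    qed
    have row: "(\<Sum>y\<in>V. p x y * h y) = p x v * h v" if "x \<in> V" for x and h :: "'a \<Rightarrow> real"
    proof -
      have "(\<Sum>y\<in>V. p x y * h y) = (\<Sum>y\<in>V. if y = v then p x v * h v else 0)"
        by (rule sum.cong) (use z that in auto)
      also have "\<dots> = p x v * h v" using v fin by simp
      finally show ?thesis .
    qed
    have "?cost p = (\<Sum>x\<in>V. p x v * real (gdist E x v))"
      by (rule sum.cong) (simp_all add: row)
    also have "\<dots> = ?c"
    proof (rule sum.cong)
      fix x assume x: "x \<in> V"
      have "mu x = (\<Sum>y\<in>V. p x y * 1)" using p(2) x by simp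
      also have "\<dots> = p x v" using row[OF x, of "\<lambda>_. 1"] by simp
      finally show "p x v * real (gdist E x v) = mu x * real (gdist E x v)" by simp
    qed simp
    finally show ?thesis .
  qed
  have "?cost ` ?C = {?c}"
  proof (intro equalityI subsetI)
    fix z assume "z \<in> ?cost ` ?C"
    then obtain p where "p \<in> ?C" "z = ?cost p" by (rule imageE)
    then show "z \<in> {?c}" using costC by simp
  next
    fix z assume "z \<in> {?c}"
    then have "z = ?cost p0" using costC[OF p0C] by simp
    then show "z \<in> ?cost ` ?C" using p0C by (rule image_eqI)
  qed
  then show ?thesis unfolding wasserstein_def by simp
qed

definition pw :: "'a set \<Rightarrow> ('a \<Rightarrow> 'a \<Rightarrow> bool) \<Rightarrow> 'a \<Rightarrow> real" where
  "pw V E x = real (deg V E x)"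

lemma reversible:
  assumes "connected_simple_graph V E" "2 \<le> card V" "x \<in> V" "y \<in> V"
  shows "pw V E x * trans_prob V E g x y = pw V E y * trans_prob V E g y x"
proof -
  have dx: "0 < deg V E x" and dy: "0 < deg V E y" using deg_pos[OF assms(1) assms(3) assms(2)] deg_pos[OF assms(1) assms(4) assms(2)] by simp_all
  have sym: "E x y = E y x" using assms(1) unfolding connected_simple_graph_def by blast
  show ?thesis
  proof (cases "x = y")
    case True then show ?thesis by simp
  next
    case False
    show ?thesis
    proof (cases "E x y")
      case True
      then have "E y x" using sym by simp
      then show ?thesis using True False dx dy by (simp add: pw_def trans_prob_def)
    next
      case F2: False
      then have "\<not> E y x" using sym by simp
      then show ?thesis using F2 False by (simp add: pw_def trans_prob_def)
    qed
  qed
qed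

lemma self_adj:
  assumes "connected_simple_graph V E" "2 \<le> card V"
  shows "(\<Sum>x\<in>V. pw V E x * Top V E g a x * b x) = (\<Sum>x\<in>V. pw V E x * a x * Top V E g b x)"
proof -
  have "(\<Sum>x\<in>V. pw V E x * Top V E g a x * b x)
      = (\<Sum>x\<in>V. \<Sum>y\<in>V. (pw V E x * trans_prob V E g x y) * a y * b x)"
    by (simp add: Top_def sum_distrib_left sum_distrib_right mult_ac)
  also have "\<dots> = (\<Sum>y\<in>V. \<Sum>x\<in>V. (pw V E x * trans_prob V E g x y) * a y * b x)"
    by (rule sum.swap)
  also have "\<dots> = (\<Sum>y\<in>V. \<Sum>x\<in>V. (pw V E y * trans_prob V E g y x) * a y * b x)"
    by (intro sum.cong refl) (simp add: reversible[OF assms])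
  also have "\<dots> = (\<Sum>x\<in>V. pw V E x * a x * Top V E g b x)"
    by (simp add: Top_def sum_distrib_left sum_distrib_right mult_ac)
  finally show ?thesis .
qed

lemma Top_supp:
  assumes "connected_simple_graph V E" "x \<notin> V"
  shows "Top V E g a x = 0"
proof -
  have "trans_prob V E g x y = 0" if "y \<in> V" for y
    using that assms unfolding connected_simple_graph_def trans_prob_def by auto
  then show ?thesis by (simp add: Top_def)
qed

lemma Top_add: "Top V E g (a + b) = Top V E g a + Top V E g b"
  by (auto simp: Top_def sum.distrib distrib_left)

lemma Top_scl: "Top V E g (fscale c a) = fscale c (Top V E g a)"
  by (auto simp: Top_def fscale_def sum_distrib_left mult_ac)

lemma Top_kr:
  assumes "connected_simple_graph V E" "2 \<le> card V" "Top V E g (Top V E g a) = 0"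
  shows "Top V E g a = 0"
proof -
  define b where "b = Top V E g a"
  have fin: "finite V" using assms(1) by (simp add: connected_simple_graph_def)
  have "(\<Sum>x\<in>V. pw V E x * b x * b x) = (\<Sum>x\<in>V. pw V E x * a x * Top V E g b x)"
    unfolding b_def by (rule self_adj[OF assms(1,2)])
  also have "\<dots> = 0" using assms(3) by (simp add: b_def)
  finally have s0: "(\<Sum>x\<in>V. pw V E x * b x * b x) = 0" .
  have nn: "\<forall>x\<in>V. 0 \<le> pw V E x * b x * b x" by (auto simp: pw_def mult.assoc intro!: mult_nonneg_nonneg)
  have iff: "(\<Sum>x\<in>V. pw V E x * b x * b x) = 0 \<longleftrightarrow> (\<forall>x\<in>V. pw V E x * b x * b x = 0)"
    by (rule sum_nonneg_eq_0_iff[OF fin]) (use nn in blast)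
  have "\<forall>x\<in>V. pw V E x * b x * b x = 0" using iff s0 by (rule iffD1)
  then have "b x = 0" if "x \<in> V" for x
    using that deg_pos[OF assms(1) that assms(2)] by (auto simp: pw_def)
  moreover have "b x = 0" if "x \<notin> V" for x
    unfolding b_def using Top_supp[OF assms(1) that] .
  ultimately show ?thesis unfolding b_def by (auto simp: fun_eq_iff)
qed




lemma Top_diff: "Top V E g (a - b) = Top V E g a - Top V E g b"
  by (auto simp: Top_def fun_eq_iff sum_subtractf right_diff_distrib)

lemma Top_pow_diff: "(Top V E g ^^ n) (a - b) = (Top V E g ^^ n) a - (Top V E g ^^ n) b"
proof (induction n)
  case 0 then show ?case by simp
next
  case (Suc n) then show ?case by (simp only: funpow.simps comp_apply Top_diff)
qed

lemma Top_pow_ind: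
  assumes "connected_simple_graph V E" "2 \<le> card V"
  shows "(Top V E g ^^ n) (\<lambda>x. if x \<in> V then 1 else 0) = (\<lambda>x. if x \<in> V then 1 else 0)"
  by (induction n) (simp_all add: row_sum[OF assms])

theorem lemma7p2:
  fixes V :: "'a set" and E :: "'a \<Rightarrow> 'a \<Rightarrow> bool" and u v :: 'a and \<alpha> \<beta> :: real
  assumes "guvab V E u v \<alpha> \<beta>" and "\<beta> = 1"
    and "\<exists>N. \<forall>n\<ge>N. W_seq V E u v \<alpha> \<beta> n = W_seq V E u v \<alpha> \<beta> N"
  shows "\<forall>n\<ge>1. W_seq V E u v \<alpha> \<beta> n = W_seq V E u v \<alpha> \<beta> 1"
proof -
  have cs: "connected_simple_graph V E" and u: "u \<in> V" and v: "v \<in> V"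
    and a0: "0 \<le> \<alpha>" and a1: "\<alpha> \<le> 1"
    using assms(1,2) unfolding guvab_def by auto
  have fin: "finite V" and ne: "V \<noteq> {}" using cs unfolding connected_simple_graph_def by auto
  have nu: "walk_dist V E \<beta> v n = (\<lambda>y. if y = v then 1 else 0)" for n
    using walk_one[OF v fin] assms(2) by simp
  consider (one) "\<alpha> = 1" | (single) "card V = 1" "\<alpha> < 1" | (big) "2 \<le> card V"
  proof -
    have "card V \<noteq> 0" using fin ne by simp
    then show ?thesis using that a1 by linarith
  qed
  then show ?thesis
  proof cases
    case one
    have "W_seq V E u v \<alpha> \<beta> n = W_seq V E u v \<alpha> \<beta> 0" for n
      unfolding W_seq_def nu using walk_one[OF u fin] one by simp
    then show ?thesis by metis
  next
    case single
    then obtain w where Vw: "V = {w}" by (auto simp: card_Suc_eq)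
    then have uw: "u = w" using u by simp
    have mu: "walk_dist V E \<alpha> u n u = \<alpha> ^ n" for n
    proof (induction n)
      case 0 then show ?case by simp
    next
      case (Suc n) then show ?case using Vw uw by (simp add: trans_prob_def)
    qed
    have empt: "couplings V (walk_dist V E \<alpha> u n) (walk_dist V E \<beta> v n) = {}" if "1 \<le> n" for n
    proof (rule ccontr)
      assume "couplings V (walk_dist V E \<alpha> u n) (walk_dist V E \<beta> v n) \<noteq> {}"
      then obtain p where p: "p \<in> couplings V (walk_dist V E \<alpha> u n) (walk_dist V E \<beta> v n)" by blast
      have vw: "v = w" using v Vw by simp
      have "p w w = \<alpha> ^ n" using p mu Vw uw unfolding couplings_def by auto
      moreover have "p w w = 1" using p nu Vw vw unfolding couplings_def by auto
      moreover have "\<alpha> ^ n \<le> \<alpha> ^ 1" by (rule power_decreasing[OF that a0 a1])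
      ultimately show False using single by simp
    qed
    have "W_seq V E u v \<alpha> \<beta> n = Inf {}" if "1 \<le> n" for n
      unfolding W_seq_def wasserstein_def using empt[OF that] by (simp only: image_empty)
    then show ?thesis by simp
  next
    case big
    define T where "T = Top V E \<alpha>"
    define f where "f x = real (gdist E x v)" for x
    define W where "W n = W_seq V E u v \<alpha> \<beta> n" for n
    have Wf: "W n = ((T ^^ n) f) u" for n
    proof -
      have s1: "(\<Sum>x\<in>V. walk_dist V E \<alpha> u n x) = 1"
      proof -
        have "(\<Sum>x\<in>V. walk_dist V E \<alpha> u n x) = (\<Sum>x\<in>V. walk_dist V E \<alpha> u n x * (if x \<in> V then 1 else 0))"
          by simp
        also have "\<dots> = ((Top V E \<alpha> ^^ n) (\<lambda>x. if x \<in> V then 1 else 0)) u"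
          by (rule walk_eval[OF u fin])
        also have "\<dots> = 1" using Top_pow_ind[OF cs big] u by simp
        finally show ?thesis .
      qed
      have "W n = (\<Sum>x\<in>V. walk_dist V E \<alpha> u n x * f x)"
        unfolding W_def W_seq_def nu f_def
        by (rule wass_delta[OF fin v walk_nonneg[OF a0 a1] s1])
      also have "\<dots> = ((T ^^ n) f) u" unfolding T_def by (rule walk_eval[OF u fin])
      finally show ?thesis .
    qed
    define g where "g = T f - f"
    have dn: "((T ^^ n) g) u = W (Suc n) - W n" for n
    proof -
      have "(T ^^ n) g = (T ^^ n) (T f) - (T ^^ n) f" unfolding g_def T_def by (rule Top_pow_diff)
      also have "(T ^^ n) (T f) = (T ^^ Suc n) f" by (simp only: funpow_Suc_right comp_def)
      finally show ?thesis by (simp add: Wf)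
    qed
    obtain N where N: "\<forall>n\<ge>N. W n = W N" using assms(3) unfolding W_def by blast
    have zN: "((T ^^ k) g) u = 0" if "N \<le> k" for k
    proof -
      have a: "W (Suc k) = W N" by (rule N[rule_format]) (use that in simp)
      have b: "W k = W N" by (rule N[rule_format]) (use that in simp)
      show ?thesis unfolding dn a b by simp
    qed
    have ev: "\<phi> u = 0" if "\<phi> \<in> fv.span {(T ^^ k) g | k. N \<le> k}" for \<phi>
      using that
    proof (induction rule: fv.span_induct_alt)
      case base then show ?case by simp
    next
      case (step c x z)
      then show ?case using zN by (auto simp: fscale_def)
    qed
    have step1: "W (Suc n) = W n" if "1 \<le> n" for n
    proof -
      have "(T ^^ n) g \<in> fv.span {(T ^^ k) g | k. N \<le> k}"
        unfolding T_def
        by (rule krylov[OF fin Top_add Top_scl Top_supp[OF cs] Top_kr[OF cs big] that])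
      then have "((T ^^ n) g) u = 0" by (rule ev)
      then show ?thesis using dn by simp
    qed
    have "W n = W 1" if "1 \<le> n" for n
      using that
    proof (induction n rule: nat_induct_at_least)
      case base then show ?case by simp
    next
      case (Suc n) then show ?case using step1 by simp
    qed
    then show ?thesis unfolding W_def by blast
  qed
qed


end
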